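(* Let $L > 0$ and let $\alpha, \beta : \mathbb{R} \to \mathbb{R}^2$ be smooth $L$-periodic maps such that $\alpha'(s) \neq 0$ for all $s$, and \[ \langle \beta, \alpha' \rangle = 0, \qquad |\alpha'|^2 + |\beta|^2 = 1 \quad \text{on } \mathbb{R}. \] Set $a = \alpha' + \beta$ and $b = \alpha' - \beta$. Then there exist $s, r \in \mathbb{R}$ such that $a(s) + b(r) = 0$.
   Context: $\langle\cdot,\cdot\rangle$ and $|\cdot|$ are the Euclidean inner product and norm on $\mathbb{R}^2$. Note that $|a| = |b| = 1$. *)

theory Defs
  imports "HOL-Analysis.Analysis"
begin

definition vderiv :: "(real \<Rightarrow> 'a::real_normed_vector) \<Rightarrow> real \<Rightarrow> 'a" where
  "vderiv f = (\<lambda>t. vector_derivative f (at t))"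

definition smooth_curve :: "(real \<Rightarrow> 'a::real_normed_vector) \<Rightarrow> bool" where
  "smooth_curve f \<longleftrightarrow> (\<forall>n t. (vderiv ^^ n) f differentiable (at t))"

end

theory Submission
  imports Defs
begin

lemma Arg_cis_eq: "-pi < x \<Longrightarrow> x \<le> pi \<Longrightarrow> Arg (cis x) = x"
  by (rule Arg_unique[of 1]) (auto simp: cis_conv_exp)

lemma T_props:
  fixes z p :: complex
  assumes z1: "cmod z = 1" and p1: "cmod p = 1" and zp: "z \<noteq> p"
  shows "-pi < Arg (- z / p) \<and> Arg (- z / p) < pi \<and> z = - p * cis (Arg (- z / p))"
proof -
  define u where "u = - z / p"
  have p0: "p \<noteq> 0" using p1 by auto
  have zu: "z = - p * u" using p0 unfolding u_def by (simp add: field_simps)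
  have u1: "cmod u = 1" using z1 p1 unfolding u_def by (simp add: norm_divide)
  have un: "u \<noteq> -1"
  proof
    assume "u = -1"
    then have "z = p" using zu by simp
    with zp show False by simp
  qed
  have "u \<noteq> 0" using u1 by auto
  then have cu: "cis (Arg u) = u" using cis_Arg[of u] u1 by (simp add: sgn_div_norm)
  have "Arg u \<noteq> pi"
  proof
    assume "Arg u = pi"
    then have "Re u < 0" "Im u = 0" by (auto simp: Arg_eq_pi)
    moreover have "cmod u = \<bar>Re u\<bar>" using \<open>Im u = 0\<close> by (rule cmod_eq_Re)
    ultimately have "Re u = -1" using u1 by linarith
    with \<open>Im u = 0\<close> have "u = -1" by (simp add: complex_eq_iff)
    with un show False by simp
  qed
  then have "Arg u < pi" using Arg_le_pi[of u] by linarith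
  moreover have "-pi < Arg u" by (rule mpi_less_Arg)
  moreover have "z = - p * cis (Arg u)" using zu cu by simp
  ultimately show ?thesis unfolding u_def by blast
qed

lemma sep:
  fixes P Q :: "real \<Rightarrow> complex" and p :: complex and L a2 c1 :: real
  assumes p1: "cmod p = 1"
  and PS: "\<forall>s\<in>{0..L}. cmod (P s) = 1 \<and> P s \<noteq> p"
  and QS: "\<forall>s\<in>{0..L}. cmod (Q s) = 1 \<and> Q s \<noteq> p"
  and mir: "\<forall>w. cmod w = 1 \<longrightarrow> (\<exists>t\<in>{0..L}. Q t = w^2 * cnj (P t))"
  and a2: "\<forall>s\<in>{0..L}. Arg (- P s / p) \<le> a2"
  and c1: "\<forall>s\<in>{0..L}. c1 \<le> Arg (- Q s / p)"
  and lt: "a2 < c1"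
  shows False
proof -
  define \<tau> where "\<tau> = (a2 + c1) / 2"
  define c where "c = cis ((\<tau> + pi) / 2)"
  define w where "w = p * c"
  have w1: "cmod w = 1" unfolding w_def c_def norm_mult using p1 by simp
  obtain t where t: "t \<in> {0..L}" and Qt: "Q t = w^2 * cnj (P t)" using mir w1 by blast
  define \<theta> where "\<theta> = Arg (- P t / p)"
  have Pt: "cmod (P t) = 1" "P t \<noteq> p" using PS t by auto
  have th: "-pi < \<theta>" "\<theta> < pi" "P t = - p * cis \<theta>"
    using T_props[OF Pt(1) p1 Pt(2)] unfolding \<theta>_def by auto
  have "\<theta> \<le> a2" using a2 t unfolding \<theta>_def by blast
  then have thlt: "\<theta> < \<tau>" using lt unfolding \<tau>_def by (simp add: field_simps)
  have pc: "p * cnj p = 1"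
    using p1 complex_norm_square[of p] by simp
  have p0: "p \<noteq> 0" using p1 by auto
  have cc: "c * c * cis (-\<theta>) = cis (\<tau> + pi - \<theta>)"
  proof -
    have "c * c * cis (-\<theta>) = cis ((\<tau> + pi) / 2 + (\<tau> + pi) / 2 + - \<theta>)"
      unfolding c_def cis_mult by simp
    also have "(\<tau> + pi) / 2 + (\<tau> + pi) / 2 + - \<theta> = \<tau> + pi - \<theta>" by simp
    finally show ?thesis .
  qed
  have c2: "cis (\<tau> + pi - \<theta>) = cis (\<tau> - pi - \<theta>)"
  proof -
    have "cis (\<tau> - pi - \<theta>) * cis (2*pi) = cis (\<tau> - pi - \<theta> + 2*pi)" by (rule cis_mult)
    also have "\<tau> - pi - \<theta> + 2*pi = \<tau> + pi - \<theta>" by simp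
    finally show ?thesis by simp
  qed
  have cn: "cnj (P t) = - cnj p * cis (-\<theta>)" using th(3) by (simp add: cis_cnj)
  have "Q t = (p * c)^2 * (- cnj p * cis (-\<theta>))" using Qt cn unfolding w_def by simp
  also have "\<dots> = - p * (p * cnj p) * (c * c * cis (-\<theta>))"
    unfolding power2_eq_square by (simp only: mult_ac mult_minus_left mult_minus_right)
  also have "\<dots> = - p * cis (\<tau> - pi - \<theta>)" unfolding pc cc c2 by simp
  finally have Qe: "Q t = - p * cis (\<tau> - pi - \<theta>)" .
  have "- Q t / p = cis (\<tau> - pi - \<theta>)" unfolding Qe using p0 by simp
  moreover have "c1 \<le> Arg (- Q t / p)" using c1 t by blast
  moreover have "c1 \<le> pi" using calculation(2) Arg_le_pi[of "- Q t / p"] by linarith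
  moreover have "\<tau> < c1" using lt unfolding \<tau>_def by (simp add: field_simps)
  ultimately have b1: "\<tau> - pi - \<theta> \<le> pi" using th(1) by linarith
  have b2: "- pi < \<tau> - pi - \<theta>" using thlt by linarith
  have "Arg (- Q t / p) = \<tau> - pi - \<theta>"
    unfolding \<open>- Q t / p = cis (\<tau> - pi - \<theta>)\<close> by (rule Arg_cis_eq[OF b2 b1])
  moreover have "c1 \<le> Arg (- Q t / p)" using c1 t by blast
  moreover have "\<tau> < c1" using lt unfolding \<tau>_def by (simp add: field_simps)
  ultimately show False using th(1) by linarith
qed

lemma mirror_alg:
  fixes d e w :: complex
  assumes "Re (d * cnj w) = 0" "Re (e * cnj d) = 0" "d \<noteq> 0" "cmod w = 1"
  shows "e - d = w^2 * cnj (e + d)" "e + d = w^2 * cnj (e - d)"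
proof -
  obtain x y where d: "d = Complex x y" by (cases d)
  obtain u v where e: "e = Complex u v" by (cases e)
  obtain cw sw where w: "w = Complex cw sw" by (cases w)
  have h1: "x * cw + y* sw = 0" using assms(1) by (simp add: d w)
  have h2: "u * x + v * y = 0" using assms(2) by (simp add: d e)
  have h3: "x \<noteq> 0 \<or> y \<noteq> 0" using assms(3) by (auto simp: d complex_eq_iff)
  have "(cmod w)^2 = 1" using assms(4) by simp
  then have h4: "cw^2 + sw^2 = 1" by (simp add: w cmod_power2)
  have k1: "(v * cw - u* sw) * x = 0"
  proof -
    have "(v * cw - u* sw) * x = v * (cw * x) - u* sw * x" by algebra
    also have "cw * x = - y* sw" using h1 by algebra
    finally show ?thesis using h2 by algebra
  qed
  have k2: "(v * cw - u* sw) * y = 0"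
  proof -
    have "(v * cw - u* sw) * y = cw * (v * y) - u * (sw * y)" by algebra
    also have "sw * y = - cw * x" using h1 by algebra
    finally show ?thesis using h2 by algebra
  qed
  have k: "v * cw - u* sw = 0" using k1 k2 h3 by auto
  show "e - d = w^2 * cnj (e + d)"
    unfolding d e w using h1 k h4
    by (simp add: complex_eq_iff power2_eq_square) algebra
  show "e + d = w^2 * cnj (e - d)"
    unfolding d e w using h1 k h4
    by (simp add: complex_eq_iff power2_eq_square) algebra
qed

lemma nonpos_helper:
  fixes z p :: complex
  assumes "cmod z = 1" "cmod p = 1" "z \<noteq> p"
  shows "- z / p \<notin> \<real>\<^sub>\<le>\<^sub>0"
proof
  assume "- z / p \<in> \<real>\<^sub>\<le>\<^sub>0"
  then have r: "Re (- z / p) \<le> 0" "Im (- z / p) = 0" by (auto simp: complex_nonpos_Reals_iff)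
  have "cmod (- z / p) = 1" using assms by (simp add: norm_divide)
  moreover have "cmod (- z / p) = \<bar>Re (- z / p)\<bar>" using r(2) by (rule cmod_eq_Re)
  ultimately have "Re (- z / p) = -1" using r by linarith
  with r(2) have "- z / p = -1" by (simp add: complex_eq_iff)
  then have "z = p" using assms(2) by (auto simp: field_simps)
  with assms(3) show False by simp
qed

lemma main_complex:
  fixes d e :: "real \<Rightarrow> complex" and L :: real
  assumes cd: "continuous_on UNIV d" and ce: "continuous_on UNIV e"
  and rep: "\<forall>s. \<exists>t\<in>{0..L}. d s = d t \<and> e s = e t"
  and L: "0 \<le> L"
  and crit: "\<forall>w. \<exists>s. Re (d s * cnj w) = 0"
  and orth: "\<forall>s. Re (e s * cnj (d s)) = 0"
  and nz: "\<forall>s. d s \<noteq> 0"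
  and nrm: "\<forall>s. (cmod (d s))\<^sup>2 + (cmod (e s))\<^sup>2 = 1"
  shows "\<exists>s r. d s + e s = e r - d r"
proof (rule ccontr)
  assume neg: "\<not> ?thesis"
  define A where "A = (\<lambda>s. d s + e s)"
  define C where "C = (\<lambda>s. e s - d s)"
  have AC: "A s \<noteq> C r" for s r using neg by (auto simp: A_def C_def)
  have A1: "cmod (A s) = 1" and C1: "cmod (C s) = 1" for s
  proof -
    have o: "Re (e s) * Re (d s) + Im (e s) * Im (d s) = 0" using orth[rule_format, of s] by simp
    have n: "(Re (d s))\<^sup>2 + (Im (d s))\<^sup>2 + ((Re (e s))\<^sup>2 + (Im (e s))\<^sup>2) = 1"
      using nrm[rule_format, of s] by (simp add: cmod_power2)
    have "(cmod (A s))\<^sup>2 = 1" using o n unfolding A_def cmod_power2 by (simp add: power2_eq_square algebra_simps)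
    then show "cmod (A s) = 1" by (smt (verit) norm_ge_zero power2_eq_1_iff)
    have "(cmod (C s))\<^sup>2 = 1" using o n unfolding C_def cmod_power2 by (simp add: power2_eq_square algebra_simps)
    then show "cmod (C s) = 1" by (smt (verit) norm_ge_zero power2_eq_1_iff)
  qed
  have mir1: "\<forall>w. cmod w = 1 \<longrightarrow> (\<exists>t\<in>{0..L}. C t = w^2 * cnj (A t))"
   and mir2: "\<forall>w. cmod w = 1 \<longrightarrow> (\<exists>t\<in>{0..L}. A t = w^2 * cnj (C t))"
  proof (safe)
    fix w :: complex assume w1: "cmod w = 1"
    obtain s where s: "Re (d s * cnj w) = 0" using crit by blast
    obtain t where t: "t \<in> {0..L}" "d s = d t" "e s = e t" using rep by blast
    have m: "e t - d t = w^2 * cnj (e t + d t)" "e t + d t = w^2 * cnj (e t - d t)"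
      using mirror_alg[of "d t" w "e t"] s t orth nz w1 by auto
    show "\<exists>t\<in>{0..L}. C t = w^2 * cnj (A t)" using m(1) t by (intro bexI[of _ t]) (simp_all only: A_def C_def add.commute)
    show "\<exists>t\<in>{0..L}. A t = w^2 * cnj (C t)" using m(2) t by (intro bexI[of _ t]) (simp_all only: A_def C_def add.commute)
  qed
  have contA: "continuous_on {0..L} A" unfolding A_def
    by (intro continuous_intros continuous_on_subset[OF cd] continuous_on_subset[OF ce]) auto
  have contC: "continuous_on {0..L} C" unfolding C_def
    by (intro continuous_intros continuous_on_subset[OF cd] continuous_on_subset[OF ce]) auto
  define SA where "SA = A ` {0..L}"
  define SC where "SC = C ` {0..L}"
  have cSA: "closed SA" unfolding SA_def
    by (intro compact_imp_closed compact_continuous_image contA) auto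
  have cSC: "closed SC" unfolding SC_def
    by (intro compact_imp_closed compact_continuous_image contC) auto
  have conn: "connected (sphere (0::complex) 1)" by (rule connected_sphere) simp
  have "\<not> sphere (0::complex) 1 \<subseteq> SA \<union> SC"
  proof
    assume cov: "sphere (0::complex) 1 \<subseteq> SA \<union> SC"
    have "SA \<inter> SC \<inter> sphere 0 1 = {}" using AC by (auto simp: SA_def SC_def)
    moreover have "A 0 \<in> SA \<inter> sphere 0 1" using L A1 by (auto simp: SA_def)
    then have "SA \<inter> sphere 0 1 \<noteq> {}" by blast
    moreover have "C 0 \<in> SC \<inter> sphere 0 1" using L C1 by (auto simp: SC_def)
    then have "SC \<inter> sphere 0 1 \<noteq> {}" by blast
    ultimately show False using conn cSA cSC cov unfolding connected_closed by blast
  qed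
  then obtain p where p1': "p \<in> sphere (0::complex) 1" and pA: "p \<notin> SA" and pC: "p \<notin> SC" by blast
  have p1: "cmod p = 1" using p1' by simp
  have Ap: "\<forall>s\<in>{0..L}. cmod (A s) = 1 \<and> A s \<noteq> p" using A1 pA by (auto simp: SA_def)
  have Cp: "\<forall>s\<in>{0..L}. cmod (C s) = 1 \<and> C s \<noteq> p" using C1 pC by (auto simp: SC_def)
  define fA where "fA = (\<lambda>s. Arg (- A s / p))"
  define fC where "fC = (\<lambda>s. Arg (- C s / p))"
  have cfA: "continuous_on {0..L} fA" unfolding fA_def
    by (intro continuous_on_Arg' continuous_intros contA) (use Ap p1 nonpos_helper in auto)
  have cfC: "continuous_on {0..L} fC" unfolding fC_def
    by (intro continuous_on_Arg' continuous_intros contC) (use Cp p1 nonpos_helper in auto)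
  have ne: "{0..L} \<noteq> {}" using L by auto
  obtain sa2 where sa2: "sa2 \<in> {0..L}" "\<forall>y\<in>{0..L}. fA y \<le> fA sa2"
    using continuous_attains_sup[OF compact_Icc ne cfA] by blast
  obtain sa1 where sa1: "sa1 \<in> {0..L}" "\<forall>y\<in>{0..L}. fA sa1 \<le> fA y"
    using continuous_attains_inf[OF compact_Icc ne cfA] by blast
  obtain rc2 where rc2: "rc2 \<in> {0..L}" "\<forall>y\<in>{0..L}. fC y \<le> fC rc2"
    using continuous_attains_sup[OF compact_Icc ne cfC] by blast
  obtain rc1 where rc1: "rc1 \<in> {0..L}" "\<forall>y\<in>{0..L}. fC rc1 \<le> fC y"
    using continuous_attains_inf[OF compact_Icc ne cfC] by blast
  consider "fA sa2 < fC rc1" | "fC rc2 < fA sa1" | "fC rc1 \<le> fA sa2" "fA sa1 \<le> fC rc2" by linarith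
  then show False
  proof cases
    case 1
    show False
      by (rule sep[OF p1 Ap Cp mir1 _ _ 1]) (use sa2 rc1 in \<open>auto simp: fA_def fC_def\<close>)
  next
    case 2
    show False
      by (rule sep[OF p1 Cp Ap mir2 _ _ 2]) (use rc2 sa1 in \<open>auto simp: fA_def fC_def\<close>)
  next
    case 3
    define v where "v = max (fA sa1) (fC rc1)"
    have iA: "connected (fA ` {0..L})" by (intro connected_continuous_image cfA) auto
    have iC: "connected (fC ` {0..L})" by (intro connected_continuous_image cfC) auto
    have IA: "\<forall>x\<in>fA ` {0..L}. \<forall>y\<in>fA ` {0..L}. \<forall>z. x \<le> z \<longrightarrow> z \<le> y \<longrightarrow> z \<in> fA ` {0..L}"
      using iA connected_iff_interval by blast
    have IC: "\<forall>x\<in>fC ` {0..L}. \<forall>y\<in>fC ` {0..L}. \<forall>z. x \<le> z \<longrightarrow> z \<le> y \<longrightarrow> z \<in> fC ` {0..L}"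
      using iC connected_iff_interval by blast
    have m1: "fA sa1 \<le> fA sa2" using sa1 sa2 by blast
    have m2: "fC rc1 \<le> fC rc2" using rc1 rc2 by blast
    have "fA sa1 \<le> v" "v \<le> fA sa2" using 3 m1 by (auto simp: v_def)
    moreover have "fA sa1 \<in> fA ` {0..L}" "fA sa2 \<in> fA ` {0..L}" using sa1 sa2 by auto
    ultimately have "v \<in> fA ` {0..L}" using IA by blast
    then obtain s where s: "s \<in> {0..L}" "fA s = v" by auto
    have "fC rc1 \<le> v" "v \<le> fC rc2" using 3 m2 by (auto simp: v_def)
    moreover have "fC rc1 \<in> fC ` {0..L}" "fC rc2 \<in> fC ` {0..L}" using rc1 rc2 by auto
    ultimately have "v \<in> fC ` {0..L}" using IC by blast
    then obtain r where r: "r \<in> {0..L}" "fC r = v" by auto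
    have "A s = - p * cis (fA s)" using T_props[of "A s" p] Ap s p1 by (auto simp: fA_def)
    also have "\<dots> = - p * cis (fC r)" using s r by simp
    also have "\<dots> = C r" using T_props[of "C r" p] Cp r p1 by (auto simp: fC_def)
    finally show False using AC by blast
  qed
qed


definition toC :: "real^2 \<Rightarrow> complex" where
  "toC v = Complex (v$1) (v$2)"

lemma toC_bl: "bounded_linear toC"
proof -
  have "toC = (\<lambda>v. complex_of_real (v$1) + \<i> * complex_of_real (v$2))"
    by (auto simp: toC_def complex_eq_iff)
  moreover have "bounded_linear (\<lambda>v::real^2. complex_of_real (v$1) + \<i> * complex_of_real (v$2))"
    by (intro bounded_linear_add bounded_linear_compose[OF bounded_linear_of_real bounded_linear_vec_nth]
        bounded_linear_compose[OF bounded_linear_mult_right bounded_linear_compose[OF bounded_linear_of_real bounded_linear_vec_nth]])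
  ultimately show ?thesis by simp
qed

lemma toC_inj: "toC u = toC v \<longleftrightarrow> u = v"
  by (auto simp: toC_def vec_eq_iff forall_2)

lemma toC_add: "toC (u + v) = toC u + toC v" and toC_diff: "toC (u - v) = toC u - toC v"
  by (auto simp: toC_def complex_eq_iff)

lemma toC_norm2: "(cmod (toC v))\<^sup>2 = (norm v)\<^sup>2"
proof -
  have 1: "(cmod (toC v))\<^sup>2 = (v$1)\<^sup>2 + (v$2)\<^sup>2" by (simp add: toC_def cmod_power2)
  have "(norm v)\<^sup>2 = v \<bullet> v" by (rule power2_norm_eq_inner)
  also have "\<dots> = (v$1)\<^sup>2 + (v$2)\<^sup>2" by (simp add: inner_vec_def sum_2 power2_eq_square)
  finally show ?thesis using 1 by simp
qed

lemma toC_inner: "Re (toC u * cnj (toC v)) = u \<bullet> v"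
  by (simp add: toC_def inner_vec_def sum_2)

lemma periodic_int:
  assumes "\<forall>s. f (s + L) = f s"
  shows "f (s + real n * L) = f s"
proof (induction n)
  case 0
  show ?case by simp
next
  case (Suc n)
  have "f (s + real (Suc n) * L) = f ((s + real n * L) + L)" by (simp add: algebra_simps)
  also have "\<dots> = f (s + real n * L)" by (rule assms[rule_format])
  also have "\<dots> = f s" by (rule Suc.IH)
  finally show ?case .
qed

lemma periodic_rep:
  fixes f :: "real \<Rightarrow> 'a"
  assumes L: "L > 0" and per: "\<forall>s. f (s + L) = f s"
  shows "\<exists>t\<in>{0..L}. f s = f t"
proof -
  define k where "k = floor (s / L)"
  define t where "t = s - real_of_int k * L"
  have "real_of_int k \<le> s / L" by (simp add: k_def)
  then have "real_of_int k * L \<le> s" using L by (simp add: field_simps)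
  then have t0: "0 \<le> t" by (simp add: t_def)
  have tL: "t \<le> L"
  proof -
    have "s / L < real_of_int k + 1" by (simp add: k_def)
    then have "s < (real_of_int k + 1) * L" using L by (simp add: field_simps)
    then show ?thesis by (simp add: t_def algebra_simps)
  qed
  have "f s = f t"
  proof (cases "k \<ge> 0")
    case True
    then obtain n where n: "k = int n" by (metis nonneg_eq_int)
    have "f (t + real n * L) = f t" by (rule periodic_int[OF per])
    moreover have "t + real n * L = s" by (simp add: t_def n)
    ultimately show ?thesis by simp
  next
    case False
    define n where "n = nat (- k)"
    have n: "k = - int n" using False by (simp add: n_def)
    have "f (s + real n * L) = f s" by (rule periodic_int[OF per])
    moreover have "s + real n * L = t" by (simp add: t_def n)
    ultimately show ?thesis by simp
  qed
  with t0 tL show ?thesis by auto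
qed

theorem lemma2p2:
  fixes L :: real and \<alpha> \<beta> :: "real \<Rightarrow> real^2"
  assumes "L > 0"
    and "smooth_curve \<alpha>" and "smooth_curve \<beta>"
    and "\<forall>s. \<alpha> (s + L) = \<alpha> s" and "\<forall>s. \<beta> (s + L) = \<beta> s"
    and "\<forall>s. vderiv \<alpha> s \<noteq> 0"
    and "\<forall>s. \<beta> s \<bullet> vderiv \<alpha> s = 0"
    and "\<forall>s. (norm (vderiv \<alpha> s))\<^sup>2 + (norm (\<beta> s))\<^sup>2 = 1"
  shows "let a = (\<lambda>s. vderiv \<alpha> s + \<beta> s); b = (\<lambda>s. vderiv \<alpha> s - \<beta> s)
         in \<exists>s r. a s + b r = 0"
proof -
  note L = assms(1) and sa = assms(2) and sb = assms(3) and pa = assms(4) and pb = assms(5)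
    and nz = assms(6) and orth = assms(7) and nrm = assms(8)
  define a' where "a' = vderiv \<alpha>"
  have difa: "\<alpha> differentiable (at t)" for t
  proof -
    have "(vderiv ^^ 0) \<alpha> differentiable (at t)" using sa unfolding smooth_curve_def by blast
    then show ?thesis by simp
  qed
  have difa': "a' differentiable (at t)" for t
  proof -
    have "(vderiv ^^ 1) \<alpha> differentiable (at t)" using sa unfolding smooth_curve_def by blast
    then show ?thesis by (simp add: a'_def)
  qed
  have difb: "\<beta> differentiable (at t)" for t
  proof -
    have "(vderiv ^^ 0) \<beta> differentiable (at t)" using sb unfolding smooth_curve_def by blast
    then show ?thesis by simp
  qed
  have da: "(\<alpha> has_vector_derivative a' t) (at t)" for t
    using vector_derivative_works[of \<alpha> "at t", THEN iffD1, OF difa[of t]] by (simp add: a'_def vderiv_def)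
  have pa': "a' (s + L) = a' s" for s
  proof -
    have "((\<alpha> \<circ> (\<lambda>t. t + L)) has_vector_derivative (1 *\<^sub>R a' (s + L))) (at s)"
      by (rule vector_diff_chain_at) (auto intro!: derivative_eq_intros da)
    moreover have "\<alpha> \<circ> (\<lambda>t. t + L) = \<alpha>" using pa by (auto simp: o_def)
    ultimately have "(\<alpha> has_vector_derivative a' (s + L)) (at s)" by simp
    then have "vector_derivative \<alpha> (at s) = a' (s + L)" by (rule vector_derivative_at)
    then show ?thesis by (simp add: a'_def vderiv_def)
  qed
  define d where "d = (\<lambda>s. toC (a' s))"
  define e where "e = (\<lambda>s. toC (\<beta> s))"
  have cd: "continuous_on UNIV d" unfolding d_def
    by (rule continuous_on_compose2[OF linear_continuous_on[OF toC_bl]])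
       (auto intro: differentiable_imp_continuous_on simp: differentiable_on_def difa' differentiable_at_withinI)
  have ce: "continuous_on UNIV e" unfolding e_def
    by (rule continuous_on_compose2[OF linear_continuous_on[OF toC_bl]])
       (auto intro: differentiable_imp_continuous_on simp: differentiable_on_def difb differentiable_at_withinI)
  have rep: "\<forall>s. \<exists>t\<in>{0..L}. d s = d t \<and> e s = e t"
  proof
    fix s
    have "\<exists>t\<in>{0..L}. (\<lambda>s. (d s, e s)) s = (\<lambda>s. (d s, e s)) t"
      by (rule periodic_rep[OF L]) (simp add: d_def e_def pa' pb)
    then show "\<exists>t\<in>{0..L}. d s = d t \<and> e s = e t" by auto
  qed
  have crit: "\<forall>w. \<exists>s. Re (d s * cnj w) = 0"
  proof
    fix w :: complex
    define g where "g = (\<lambda>s. Re (toC (\<alpha> s) * cnj w))"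
    have blg: "bounded_linear (\<lambda>v. Re (toC v * cnj w))"
      by (intro bounded_linear_compose[OF bounded_linear_Re] bounded_linear_compose[OF bounded_linear_mult_left] toC_bl)
    have dg: "(g has_real_derivative Re (d s * cnj w)) (at s)" for s
      unfolding has_real_derivative_iff_has_vector_derivative g_def d_def
      by (rule bounded_linear.has_vector_derivative[OF blg da])
    have cg: "continuous_on {0..L} g"
      using dg by (intro continuous_at_imp_continuous_on) (auto intro: DERIV_isCont)
    obtain s0 where s0: "s0 \<in> {0..L}" "\<forall>y\<in>{0..L}. g y \<le> g s0"
      using continuous_attains_sup[OF compact_Icc _ cg] L by auto
    have gper: "\<forall>s. g (s + L) = g s" using pa by (simp add: g_def)
    have "\<forall>y. \<bar>s0 - y\<bar> < 1 \<longrightarrow> g y \<le> g s0"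
    proof (intro allI impI)
      fix y
      obtain t where "t \<in> {0..L}" "g y = g t" using periodic_rep[OF L gper] by blast
      then show "g y \<le> g s0" using s0(2) by simp
    qed
    then have "Re (d s0 * cnj w) = 0" using DERIV_local_max[OF dg[of s0] zero_less_one] by blast
    then show "\<exists>s. Re (d s * cnj w) = 0" by blast
  qed
  have orth': "\<forall>s. Re (e s * cnj (d s)) = 0"
  proof
    fix s
    have "Re (e s * cnj (d s)) = \<beta> s \<bullet> a' s" by (simp only: d_def e_def toC_inner)
    then show "Re (e s * cnj (d s)) = 0" using orth by (simp add: a'_def)
  qed
  have nz': "\<forall>s. d s \<noteq> 0"
  proof
    fix s
    have "toC 0 = 0" by (simp add: toC_def zero_complex.ctr)
    then show "d s \<noteq> 0" using nz toC_inj[of "a' s" 0] by (auto simp: d_def a'_def)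
  qed
  have nrm': "\<forall>s. (cmod (d s))\<^sup>2 + (cmod (e s))\<^sup>2 = 1"
    using nrm by (simp add: d_def e_def toC_norm2 a'_def)
  obtain s r where sr: "d s + e s = e r - d r"
    using main_complex[OF cd ce rep _ crit orth' nz' nrm'] L by auto
  then have "toC (a' s + \<beta> s) = toC (\<beta> r - a' r)" by (simp add: d_def e_def toC_add toC_diff)
  then have "a' s + \<beta> s = \<beta> r - a' r" by (simp add: toC_inj)
  then have "a' s + \<beta> s + (a' r - \<beta> r) = 0" by (simp add: algebra_simps)
  then show ?thesis unfolding Let_def a'_def by blast
qed

end
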